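(* Let $n\geq 1$. The restriction map $H^\bullet(\Gamma_{n+1};\mathbb{Q})\to H^\bullet(\Gamma_n;\mathbb{Q})$ induced by the natural inclusion $\Gamma_n\hookrightarrow\Gamma_{n+1}$ sends $\alpha_{\mathcal D}$, for $\mathcal D\in\mathcal D_{n+1}$, to $\alpha_{\mathcal D'}$ if $\mathcal D$ has an isolated vertex and $\mathcal D'\in\mathcal D_n$ is obtained by deleting one isolated vertex, and to $0$ if $\mathcal D$ has no isolated vertex. Consequently, for every $r\ge 0$, the map $H^r(\Gamma_{n+1};\mathbb{Q})\to H^r(\Gamma_n;\mathbb{Q})$ is an isomorphism whenever $n\geq 2r$.
   Context: $\Gamma_n=\mathrm{Br}_n/[P_n,P_n]$ where $P_n\subset\mathrm{Br}_n$ is the pure braid group; $\mathbb{Z}\mathcal A_n=P_n/[P_n,P_n]$; $H^\bullet(\Gamma_n;\mathbb{Q})$ is identified via restriction with $H^\bullet(\mathbb{Z}\mathcal A_n;\mathbb{Q})^{S_n}$, where $H^\bullet(\mathbb{Z}\mathcal A_n;\mathbb{Q})$ is the exterior algebra on $\omega_{ij}$ ($1\le i<j\le n$), with $\sigma(\omega_{ij})=\omega_{\sigma(i)\sigma(j)}$ if $\sigma(i)<\sigma(j)$, $\omega_{\sigma(j)\sigma(i)}$ otherwise. The inclusion $\Gamma_n\hookrightarrow\Gamma_{n+1}$ comes from adding a strand; on these exterior algebras restriction sends $\omega_{ij}$ with $j\le n$ to $\omega_{ij}$ and $\omega_{i,n+1}$ to $0$. For a simple graph $\Delta$ on $\{1,\dots,n\}$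 with lexicographically ordered edges $(i_1,j_1),\dots,(i_k,j_k)$, $\mu_\Delta=\omega_{i_1j_1}\cdots\omega_{i_kj_k}$. A graph is invariant if every automorphism induces an even permutation of its edges; $\mathcal D_n$ is the set of isomorphism classes of invariant graphs with exactly $n$ vertices. Representatives are chosen coherently: for each class $\mathcal G_0$ without isolated vertices a representative on $\{1,\dots,|V\mathcal G_0|\}$ is fixed, and the representative $\Delta_{\mathcal D}$ of a class $\mathcal D$ with $n$ vertices whose non-isolated part is $\mathcal G_0$ is that graph with the vertices $|V\mathcal G_0|+1,\dots,n$ added as isolated vertices. Then $\alpha_{\mathcal D}=\frac{1}{|\mathrm{Stab}_{S_n}(\Delta_{\mathcal D})|}\sum_{\sigma\in S_n}\sigma(\mu_{\Delta_{\mathcal D}})$, and the $\alpha_{\mathcal D}$, $\mathcal D\in\mathcal D_n$, form a basis of $H^\bullet(\Gamma_n;\mathbb{Q})$. *)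

theory Defs
  imports Complex_Main "HOL-Combinatorics.Permutations" "HOL-Library.Product_Lexorder"
begin

text \<open>Edges are pairs (i,j) with i<j; a simple graph on {1..n} is given by its edge set.
  Pairs are ordered lexicographically (Product_Lexorder).\<close>

definition edges_on :: "nat \<Rightarrow> (nat \<times> nat) set" where
  "edges_on n = {(i,j). 1 \<le> i \<and> i < j \<and> j \<le> n}"

definition graph_on :: "nat \<Rightarrow> (nat \<times> nat) set \<Rightarrow> bool" where
  "graph_on n E \<longleftrightarrow> E \<subseteq> edges_on n"

definition emap :: "(nat \<Rightarrow> nat) \<Rightarrow> nat \<times> nat \<Rightarrow> nat \<times> nat" where
  "emap \<sigma> e = (min (\<sigma> (fst e)) (\<sigma> (snd e)), max (\<sigma> (fst e)) (\<sigma> (snd e)))"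

definition gact :: "(nat \<Rightarrow> nat) \<Rightarrow> (nat \<times> nat) set \<Rightarrow> (nat \<times> nat) set" where
  "gact \<sigma> E = emap \<sigma> ` E"

definition orbit :: "nat \<Rightarrow> (nat \<times> nat) set \<Rightarrow> (nat \<times> nat) set set" where
  "orbit n E = {gact \<sigma> E | \<sigma>. \<sigma> permutes {1..n}}"

definition graph_classes :: "nat \<Rightarrow> (nat \<times> nat) set set set" where
  "graph_classes n = {orbit n E | E. graph_on n E}"

definition stab :: "nat \<Rightarrow> (nat \<times> nat) set \<Rightarrow> (nat \<Rightarrow> nat) set" where
  "stab n E = {\<sigma>. \<sigma> permutes {1..n} \<and> gact \<sigma> E = E}"

definition invariant_graph :: "nat \<Rightarrow> (nat \<times> nat) set \<Rightarrow> bool" where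
  "invariant_graph n E \<longleftrightarrow> graph_on n E \<and>
     (\<forall>\<sigma> \<in> stab n E. evenperm (\<lambda>e. if e \<in> E then emap \<sigma> e else e))"

definition D_classes :: "nat \<Rightarrow> (nat \<times> nat) set set set" where
  "D_classes n = {D \<in> graph_classes n. \<exists>E \<in> D. invariant_graph n E}"

definition verts :: "(nat \<times> nat) set \<Rightarrow> nat set" where
  "verts E = fst ` E \<union> snd ` E"

definition isolated :: "nat \<Rightarrow> (nat \<times> nat) set \<Rightarrow> bool" where
  "isolated v E \<longleftrightarrow> v \<notin> verts E"

definition delete_vertex :: "nat \<Rightarrow> (nat \<times> nat) set \<Rightarrow> (nat \<times> nat) set" where
  "delete_vertex v E = (\<lambda>(i,j). (if i > v then i - 1 else i, if j > v then j - 1 else j)) ` E"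

definition isofree_classes :: "(nat \<times> nat) set set set" where
  "isofree_classes = {orbit m E | m E. graph_on m E \<and> verts E = {1..m}}"

definition nonisolated_part :: "(nat \<times> nat) set set \<Rightarrow> (nat \<times> nat) set set" where
  "nonisolated_part D = {F \<in> D. \<exists>m. verts F = {1..m}}"

text \<open>A coherent choice of representatives: R picks, for each class without isolated vertices,
  a representative on {1..m}; Delta_D is that graph with isolated vertices appended
  (same edge set).\<close>
definition rep_choice :: "((nat \<times> nat) set set \<Rightarrow> (nat \<times> nat) set) \<Rightarrow> bool" where
  "rep_choice R \<longleftrightarrow> (\<forall>C \<in> isofree_classes. R C \<in> C)"

definition Delta :: "((nat \<times> nat) set set \<Rightarrow> (nat \<times> nat) set) \<Rightarrow> (nat \<times> nat) set set
    \<Rightarrow> (nat \<times> nat) set" where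
  "Delta R D = R (nonisolated_part D)"

text \<open>Elements of the exterior algebra on the w_ij are coefficient functions on
  monomials mu_F (F a finite edge set, factors in lexicographic order).\<close>
type_synonym ext = "(nat \<times> nat) set \<Rightarrow> rat"

definition inversions :: "('a::linorder) list \<Rightarrow> nat" where
  "inversions xs = card {(a,b). a < b \<and> b < length xs \<and> xs ! b < xs ! a}"

text \<open>sigma(mu_E) = esign sigma E * mu_(gact sigma E): the sign of sorting the factors.\<close>
definition esign :: "(nat \<Rightarrow> nat) \<Rightarrow> (nat \<times> nat) set \<Rightarrow> rat" where
  "esign \<sigma> E = (-1) ^ inversions (map (emap \<sigma>) (sorted_list_of_set E))"

definition act :: "nat \<Rightarrow> (nat \<Rightarrow> nat) \<Rightarrow> ext \<Rightarrow> ext" where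
  "act n \<sigma> x = (\<lambda>F. \<Sum>E\<in>Pow (edges_on n). x E * (if gact \<sigma> E = F then esign \<sigma> E else 0))"

text \<open>H^r(Gamma_n;Q) = S_n-invariants of degree r in H(ZA_n;Q).\<close>
definition cohom :: "nat \<Rightarrow> nat \<Rightarrow> ext set" where
  "cohom n r = {x. (\<forall>F. (F \<notin> Pow (edges_on n) \<or> card F \<noteq> r) \<longrightarrow> x F = 0) \<and>
                   (\<forall>\<sigma>. \<sigma> permutes {1..n} \<longrightarrow> act n \<sigma> x = x)}"

text \<open>Restriction H(ZA_{n+1}) \<rightarrow> H(ZA_n): w_ij \<mapsto> w_ij (j \<le> n), w_{i,n+1} \<mapsto> 0.\<close>
definition res :: "nat \<Rightarrow> ext \<Rightarrow> ext" where
  "res n x = (\<lambda>F. if F \<subseteq> edges_on n then x F else 0)"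

definition alpha :: "((nat \<times> nat) set set \<Rightarrow> (nat \<times> nat) set) \<Rightarrow> nat \<Rightarrow> (nat \<times> nat) set set \<Rightarrow> ext" where
  "alpha R n D = (\<lambda>F. (1 / of_nat (card (stab n (Delta R D)))) *
      (\<Sum>\<sigma> \<in> {\<sigma>. \<sigma> permutes {1..n}}.
          if gact \<sigma> (Delta R D) = F then esign \<sigma> (Delta R D) else 0))"

end

theory Submission
  imports Defs
begin

definition invs :: "('a::linorder \<Rightarrow> 'b::linorder) \<Rightarrow> 'a set \<Rightarrow> ('a \<times> 'a) set" where
  "invs f E = {(a,b). a \<in> E \<and> b \<in> E \<and> a < b \<and> f b < f a}"

lemma inversions_card:
  assumes "finite E"
  shows "inversions (map f (sorted_list_of_set E)) = card (invs f E)"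
proof -
  define xs where "xs = sorted_list_of_set E"
  have sw: "sorted_wrt (<) xs" unfolding xs_def using assms by simp
  have dxs: "distinct xs" unfolding xs_def using assms by simp
  have sxs: "set xs = E" unfolding xs_def using assms by simp
  let ?I = "{(a,b). a < b \<and> b < length xs \<and> f (xs ! b) < f (xs ! a)}"
  have "inversions (map f xs) = card ?I" unfolding inversions_def length_map
    by (intro arg_cong[where f=card]) (auto simp: nth_map)
  also have "bij_betw (\<lambda>(i,j). (xs ! i, xs ! j)) ?I (invs f E)"
  proof (rule bij_betw_imageI)
    show "inj_on (\<lambda>(i,j). (xs ! i, xs ! j)) ?I"
      by (auto simp: inj_on_def nth_eq_iff_index_eq[OF dxs])
    show "(\<lambda>(i,j). (xs ! i, xs ! j)) ` ?I = invs f E"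
    proof
      show "(\<lambda>(i,j). (xs ! i, xs ! j)) ` ?I \<subseteq> invs f E"
        using sorted_wrt_nth_less[OF sw] sxs by (auto simp: invs_def)
      show "invs f E \<subseteq> (\<lambda>(i,j). (xs ! i, xs ! j)) ` ?I"
      proof
        fix p assume "p \<in> invs f E"
        then obtain a b where p: "p = (a,b)" "a \<in> E" "b \<in> E" "a < b" "f b < f a" by (auto simp: invs_def)
        obtain i where i: "i < length xs" "xs ! i = a" using p sxs by (metis in_set_conv_nth)
        obtain j where j: "j < length xs" "xs ! j = b" using p sxs by (metis in_set_conv_nth)
        have "i < j"
        proof (rule ccontr)
          assume "\<not> i < j"
          then have "j < i \<or> j = i" by auto
          then show False using sorted_wrt_nth_less[OF sw, of j i] i j p by auto
        qed
        then show "p \<in> (\<lambda>(i,j). (xs ! i, xs ! j)) ` ?I" using i j p by (auto intro!: image_eqI[of _ _ "(i,j)"])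
      qed
    qed
  qed
  then have "card ?I = card (invs f E)" by (rule bij_betw_same_card)
  finally show ?thesis unfolding xs_def .
qed

lemma neg1_pow_symdiff:
  assumes "finite A" "finite B"
  shows "(-1::rat) ^ card ((A - B) \<union> (B - A)) = (-1) ^ card A * (-1) ^ card B"
proof -
  have c1: "card ((A - B) \<union> (B - A)) = card (A - B) + card (B - A)"
    using assms by (intro card_Un_disjoint) auto
  have c2: "card A = card (A - B) + card (A \<inter> B)"
    using assms by (metis Diff_Diff_Int card_Diff_subset_Int card_mono finite_Diff inf_le1 le_add_diff_inverse2 Int_commute  card_Int_Diff add.commute)
  have c3: "card B = card (B - A) + card (A \<inter> B)"
    using assms by (metis add.commute card_Int_Diff inf_commute)
  have "(-1::rat) ^ card A * (-1) ^ card B = (-1) ^ (card (A - B) + card (B - A)) * (-1) ^ (2 * card (A \<inter> B))"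
    unfolding c2 c3 by (simp add: power_add algebra_simps)
  also have "\<dots> = (-1) ^ (card (A - B) + card (B - A))" by (simp add: power_mult)
  finally show ?thesis using c1 by simp
qed

lemma invs_comp:
  fixes f :: "'a::linorder \<Rightarrow> 'b::linorder" and g :: "'b \<Rightarrow> 'c::linorder"
  assumes fin: "finite E" and injf: "inj_on f E" and injg: "inj_on g (f ` E)"
  shows "(-1::rat) ^ card (invs (g \<circ> f) E) = (-1) ^ card (invs g (f ` E)) * (-1) ^ card (invs f E)"
proof -
  define X where "X = {(a,b). a \<in> E \<and> b \<in> E \<and> a < b}"
  have finX: "finite X" unfolding X_def
    by (rule finite_subset[of _ "E \<times> E"]) (auto simp: fin)
  define A where "A = invs f E"
  define B where "B = {p \<in> X. (f (fst p) < f (snd p) \<and> g (f (snd p)) < g (f (fst p))) \<or>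
                              (f (snd p) < f (fst p) \<and> g (f (fst p)) < g (f (snd p)))}"
  have AX: "A \<subseteq> X" unfolding A_def X_def invs_def by auto
  have finA: "finite A" using AX finX finite_subset by blast
  have finB: "finite B" using finX unfolding B_def by simp
  have ne: "f a \<noteq> f b" "g (f a) \<noteq> g (f b)" if "a \<in> E" "b \<in> E" "a < b" for a b
  proof -
    show "f a \<noteq> f b" using injf that by (metis inj_on_contraD less_irrefl)
    then show "g (f a) \<noteq> g (f b)" using injg that by (metis image_eqI inj_on_contraD)
  qed
  have eq: "invs (g \<circ> f) E = (A - B) \<union> (B - A)"
  proof (rule set_eqI)
    fix p :: "'a \<times> 'a"
    obtain a b where p: "p = (a,b)" by (cases p)
    show "p \<in> invs (g \<circ> f) E \<longleftrightarrow> p \<in> (A - B) \<union> (B - A)"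
    proof (cases "a \<in> E \<and> b \<in> E \<and> a < b")
      case True
      then have n1: "f a \<noteq> f b" and n2: "g (f a) \<noteq> g (f b)" using ne by auto
      show ?thesis using True n1 n2 unfolding p A_def B_def X_def invs_def
        by (auto simp: neq_iff)
    next
      case False
      then show ?thesis unfolding p A_def B_def X_def invs_def by auto
    qed
  qed
  have cB: "card B = card (invs g (f ` E))"
  proof (rule bij_betw_same_card[of "\<lambda>p. (min (f (fst p)) (f (snd p)), max (f (fst p)) (f (snd p)))"],
         rule bij_betw_imageI)
    show "inj_on (\<lambda>p. (min (f (fst p)) (f (snd p)), max (f (fst p)) (f (snd p)))) B"
    proof (rule inj_onI)
      fix p q assume pB: "p \<in> B" and qB: "q \<in> B" and
        e: "(min (f (fst p)) (f (snd p)), max (f (fst p)) (f (snd p))) = (min (f (fst q)) (f (snd q)), max (f (fst q)) (f (snd q)))"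
      obtain a b where p: "p = (a,b)" by (cases p)
      obtain c d where q: "q = (c,d)" by (cases q)
      have h: "a \<in> E" "b \<in> E" "a < b" "c \<in> E" "d \<in> E" "c < d" using pB qB unfolding p q B_def X_def by auto
      have "{f a, f b} = {f c, f d}" using e unfolding p q
        by (auto simp: min_def max_def split: if_splits)
      then have "(f a = f c \<and> f b = f d) \<or> (f a = f d \<and> f b = f c)" by (auto simp: doubleton_eq_iff)
      then have "(a = c \<and> b = d) \<or> (a = d \<and> b = c)" using injf h by (auto dest: inj_onD)
      then show "p = q" using h unfolding p q by auto
    qed
    show "(\<lambda>p. (min (f (fst p)) (f (snd p)), max (f (fst p)) (f (snd p)))) ` B = invs g (f ` E)"
    proof
      show "(\<lambda>p. (min (f (fst p)) (f (snd p)), max (f (fst p)) (f (snd p)))) ` B \<subseteq> invs g (f ` E)"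
      proof
        fix q assume "q \<in> (\<lambda>p. (min (f (fst p)) (f (snd p)), max (f (fst p)) (f (snd p)))) ` B"
        then obtain a b where h: "(a,b) \<in> B" "q = (min (f a) (f b), max (f a) (f b))" by auto
        then have "a \<in> E" "b \<in> E" "a < b" unfolding B_def X_def by auto
        then show "q \<in> invs g (f ` E)" using h unfolding B_def invs_def
          by (auto simp: min_def max_def)
      qed
      show "invs g (f ` E) \<subseteq> (\<lambda>p. (min (f (fst p)) (f (snd p)), max (f (fst p)) (f (snd p)))) ` B"
      proof
        fix q assume "q \<in> invs g (f ` E)"
        then obtain a b where h: "q = (f a, f b)" "a \<in> E" "b \<in> E" "f a < f b" "g (f b) < g (f a)"
          unfolding invs_def by auto
        have "a \<noteq> b" using h by auto
        then have "a < b \<or> b < a" by auto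
        then show "q \<in> (\<lambda>p. (min (f (fst p)) (f (snd p)), max (f (fst p)) (f (snd p)))) ` B"
        proof
          assume "a < b"
          then have "(a,b) \<in> B" using h unfolding B_def X_def by auto
          then show ?thesis using h by (auto intro!: image_eqI[of _ _ "(a,b)"])
        next
          assume "b < a"
          then have "(b,a) \<in> B" using h unfolding B_def X_def by auto
          then show ?thesis using h by (auto intro!: image_eqI[of _ _ "(b,a)"])
        qed
      qed
    qed
  qed
  have "(-1::rat) ^ card (invs (g \<circ> f) E) = (-1) ^ card A * (-1) ^ card B"
    unfolding eq by (rule neg1_pow_symdiff[OF finA finB])
  then show ?thesis unfolding cB A_def by simp
qed

definition ltp :: "(nat \<times> nat) set" where "ltp = {p. fst p < snd p}"

lemma edges_on_ltp: "edges_on N \<subseteq> ltp"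
  unfolding edges_on_def ltp_def by auto

lemma emap_comp: "emap \<sigma> (emap \<tau> e) = emap (\<sigma> \<circ> \<tau>) e"
  by (cases "\<tau> (fst e) \<le> \<tau> (snd e)") (auto simp: emap_def min_def max_def)

lemma gact_comp: "gact \<sigma> (gact \<tau> E) = gact (\<sigma> \<circ> \<tau>) E"
  unfolding gact_def by (auto simp: emap_comp image_image)

lemma emap_id_lt: "fst e \<le> snd e \<Longrightarrow> emap id e = e"
  by (cases e) (auto simp: emap_def min_def max_def)

lemma gact_id: "E \<subseteq> ltp \<Longrightarrow> gact id E = E"
  unfolding gact_def ltp_def by (force simp: emap_id_lt)

lemma verts_UN: "verts E = (\<Union>e\<in>E. {fst e, snd e})"
  unfolding verts_def by auto

lemma verts_emap: "{fst (emap \<sigma> e), snd (emap \<sigma> e)} = \<sigma> ` {fst e, snd e}"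
  unfolding emap_def by (auto simp: min_def max_def)

lemma verts_gact: "verts (gact \<sigma> E) = \<sigma> ` verts E"
  unfolding verts_UN gact_def by (simp add: verts_emap image_UN)

lemma gact_cong: "(\<And>u. u \<in> verts E \<Longrightarrow> \<sigma> u = \<tau> u) \<Longrightarrow> gact \<sigma> E = gact \<tau> E"
  unfolding gact_def emap_def verts_def by (intro image_cong) auto

lemma esign_cong:
  assumes "\<And>u. u \<in> verts E \<Longrightarrow> \<sigma> u = \<tau> u"
  shows "esign \<sigma> E = esign \<tau> E"
proof (cases "finite E")
  case True
  have eq: "map (emap \<sigma>) (sorted_list_of_set E) = map (emap \<tau>) (sorted_list_of_set E)"
    using True assms by (intro map_cong) (auto simp: emap_def verts_def)
  show ?thesis unfolding esign_def eq by (rule refl)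
next
  case False
  then show ?thesis unfolding esign_def by simp
qed

lemma emap_lt: "inj \<sigma> \<Longrightarrow> fst e < snd e \<Longrightarrow> fst (emap \<sigma> e) < snd (emap \<sigma> e)"
proof -
  assume a: "inj \<sigma>" "fst e < snd e"
  then have "\<sigma> (fst e) \<noteq> \<sigma> (snd e)" by (metis inj_eq less_irrefl)
  then show ?thesis unfolding emap_def by (auto simp: min_def max_def)
qed

lemma gact_ltp: "inj \<sigma> \<Longrightarrow> E \<subseteq> ltp \<Longrightarrow> gact \<sigma> E \<subseteq> ltp"
  unfolding gact_def ltp_def using emap_lt by auto

lemma inj_emap: assumes "inj \<sigma>" "E \<subseteq> ltp" shows "inj_on (emap \<sigma>) E"
proof (rule inj_onI)
  fix e f assume "e \<in> E" "f \<in> E" "emap \<sigma> e = emap \<sigma> f"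
  then have h: "fst e < snd e" "fst f < snd f"
    "min (\<sigma> (fst e)) (\<sigma> (snd e)) = min (\<sigma> (fst f)) (\<sigma> (snd f))"
    "max (\<sigma> (fst e)) (\<sigma> (snd e)) = max (\<sigma> (fst f)) (\<sigma> (snd f))"
    using assms(2) unfolding ltp_def emap_def by auto
  have "{\<sigma> (fst e), \<sigma> (snd e)} = {\<sigma> (fst f), \<sigma> (snd f)}"
    using h(3,4) by (auto simp: min_def max_def split: if_splits)
  then have "{fst e, snd e} = {fst f, snd f}"
    using assms(1) by (auto simp: doubleton_eq_iff dest: injD)
  then show "e = f" using h(1,2) by (cases e; cases f) (auto simp: doubleton_eq_iff)
qed

lemma card_gact: "inj \<sigma> \<Longrightarrow> E \<subseteq> ltp \<Longrightarrow> card (gact \<sigma> E) = card E"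
  unfolding gact_def by (rule card_image[OF inj_emap])

lemma esign_invs: "finite E \<Longrightarrow> esign \<sigma> E = (-1) ^ card (invs (emap \<sigma>) E)"
  unfolding esign_def by (simp add: inversions_card)

lemma esign_comp:
  assumes "inj \<sigma>" "inj \<tau>" "finite E" "E \<subseteq> ltp"
  shows "esign (\<sigma> \<circ> \<tau>) E = esign \<sigma> (gact \<tau> E) * esign \<tau> E"
proof -
  have fe: "emap (\<sigma> \<circ> \<tau>) = emap \<sigma> \<circ> emap \<tau>" by (auto simp: fun_eq_iff emap_comp)
  have "inj_on (emap \<sigma>) (emap \<tau> ` E)"
    using inj_emap[OF assms(1) gact_ltp[OF assms(2,4)]] unfolding gact_def .
  then show ?thesis
    unfolding esign_invs[OF assms(3)] esign_invs[OF finite_imageI[OF assms(3)], unfolded gact_def[symmetric]] fe gact_def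
    using invs_comp[OF assms(3) inj_emap[OF assms(2,4)]]
    by (simp add: esign_invs gact_def assms(3))
qed

lemma esign_sq: "esign \<sigma> E * esign \<sigma> E = 1"
  unfolding esign_def by (simp add: power_mult_distrib[symmetric])

lemma esign_nz: "esign \<sigma> E \<noteq> 0"
  unfolding esign_def by simp

lemma ext_perm:
  assumes fS: "finite S" and AS: "A \<subseteq> S" and inj: "inj_on f A" and fA: "f ` A \<subseteq> S"
  shows "\<exists>\<pi>. \<pi> permutes S \<and> (\<forall>a\<in>A. \<pi> a = f a)"
proof -
  have finA: "finite A" using fS AS finite_subset by blast
  have "card (S - A) = card (S - f ` A)"
    using card_Diff_subset[OF finA AS] card_Diff_subset[OF finite_imageI[OF finA] fA] card_image[OF inj]
    by simp
  then obtain g where g: "bij_betw g (S - A) (S - f ` A)"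
    using finite_same_card_bij fS by (meson finite_Diff)
  define \<pi> where "\<pi> x = (if x \<in> A then f x else if x \<in> S then g x else x)" for x
  have b1: "bij_betw \<pi> A (f ` A)"
    unfolding bij_betw_def using inj by (auto simp: \<pi>_def inj_on_def image_iff)
  have b2: "bij_betw \<pi> (S - A) (S - f ` A)"
    using g by (rule bij_betw_cong[THEN iffD1, rotated]) (auto simp: \<pi>_def)
  have "bij_betw \<pi> (A \<union> (S - A)) (f ` A \<union> (S - f ` A))"
    by (rule bij_betw_combine[OF b1 b2]) auto
  moreover have "A \<union> (S - A) = S" "f ` A \<union> (S - f ` A) = S" using AS fA by auto
  ultimately have "bij_betw \<pi> S S" by simp
  then have "\<pi> permutes S" by (rule bij_imp_permutes) (use AS in \<open>auto simp: \<pi>_def\<close>)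
  then show ?thesis by (auto simp: \<pi>_def)
qed

lemma edges_on_iff: "F \<subseteq> edges_on M \<longleftrightarrow> F \<subseteq> ltp \<and> verts F \<subseteq> {1..M}"
  unfolding edges_on_def ltp_def verts_def by force

lemma finite_edges_on: "finite (edges_on N)"
  by (rule finite_subset[of _ "{1..N} \<times> {1..N}"]) (auto simp: edges_on_def)

lemma gact_edges:
  assumes "E \<subseteq> ltp" "inj \<sigma>" "\<sigma> ` verts E \<subseteq> {1..M}"
  shows "gact \<sigma> E \<subseteq> edges_on M"
  using assms gact_ltp[OF assms(2,1)] by (simp add: edges_on_iff verts_gact)

lemma gact_perm_edges:
  assumes "\<sigma> permutes {1..N}" "E \<subseteq> edges_on N"
  shows "gact \<sigma> E \<subseteq> edges_on N"
proof (rule gact_edges)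
  show "E \<subseteq> ltp" using assms(2) edges_on_ltp by blast
  show "inj \<sigma>" using assms(1) by (rule permutes_inj)
  have "verts E \<subseteq> {1..N}" using assms(2) by (simp add: edges_on_iff)
  then show "\<sigma> ` verts E \<subseteq> {1..N}" using permutes_image[OF assms(1)] by blast
qed

lemma gact_inv:
  assumes "\<sigma> permutes S" "E \<subseteq> ltp"
  shows "gact (inv \<sigma>) (gact \<sigma> E) = E" "gact \<sigma> (gact (inv \<sigma>) E) = E"
  using assms by (simp_all add: gact_comp permutes_inv_o gact_id)

lemma act_at:
  assumes "\<sigma> permutes {1..N}" "E \<subseteq> edges_on N"
  shows "act N \<sigma> x (gact \<sigma> E) = x E * esign \<sigma> E"
proof -
  have inj: "inj_on (gact \<sigma>) (Pow (edges_on N))"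
    unfolding gact_def
    by (rule inj_on_image_Pow, rule inj_emap[OF permutes_inj[OF assms(1)] edges_on_ltp])
  have "act N \<sigma> x (gact \<sigma> E) = (\<Sum>E'\<in>Pow (edges_on N). if E' = E then x E * esign \<sigma> E else 0)"
    unfolding act_def
  proof (rule sum.cong[OF refl])
    fix E' assume "E' \<in> Pow (edges_on N)"
    then have "gact \<sigma> E' = gact \<sigma> E \<longleftrightarrow> E' = E" using inj assms(2) by (auto dest: inj_onD)
    then show "x E' * (if gact \<sigma> E' = gact \<sigma> E then esign \<sigma> E' else 0) = (if E' = E then x E * esign \<sigma> E else 0)"
      by auto
  qed
  also have "\<dots> = x E * esign \<sigma> E" using assms(2) finite_edges_on by (simp add: sum.delta')
  finally show ?thesis .
qed

lemma act_out:
  assumes "\<sigma> permutes {1..N}" "\<not> F \<subseteq> edges_on N"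
  shows "act N \<sigma> x F = 0"
  unfolding act_def using gact_perm_edges[OF assms(1)] assms(2)
  by (intro sum.neutral) auto

lemma cohom_iff:
  "x \<in> cohom N r \<longleftrightarrow> (\<forall>F. (F \<notin> Pow (edges_on N) \<or> card F \<noteq> r) \<longrightarrow> x F = 0) \<and>
     (\<forall>\<sigma> E. \<sigma> permutes {1..N} \<longrightarrow> E \<subseteq> edges_on N \<longrightarrow> x (gact \<sigma> E) = x E * esign \<sigma> E)"
proof
  assume x: "x \<in> cohom N r"
  then show "(\<forall>F. (F \<notin> Pow (edges_on N) \<or> card F \<noteq> r) \<longrightarrow> x F = 0) \<and>
     (\<forall>\<sigma> E. \<sigma> permutes {1..N} \<longrightarrow> E \<subseteq> edges_on N \<longrightarrow> x (gact \<sigma> E) = x E * esign \<sigma> E)"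
  proof (intro conjI allI impI)
    fix F assume "F \<notin> Pow (edges_on N) \<or> card F \<noteq> r"
    then show "x F = 0" using x unfolding cohom_def by blast
  next
    fix \<sigma> E assume s: "\<sigma> permutes {1..N}" and E: "E \<subseteq> edges_on N"
    have "act N \<sigma> x = x" using x s unfolding cohom_def by blast
    then show "x (gact \<sigma> E) = x E * esign \<sigma> E" using act_at[OF s E, of x] by simp
  qed
next
  assume h: "(\<forall>F. (F \<notin> Pow (edges_on N) \<or> card F \<noteq> r) \<longrightarrow> x F = 0) \<and>
     (\<forall>\<sigma> E. \<sigma> permutes {1..N} \<longrightarrow> E \<subseteq> edges_on N \<longrightarrow> x (gact \<sigma> E) = x E * esign \<sigma> E)"
  have "act N \<sigma> x = x" if s: "\<sigma> permutes {1..N}" for \<sigma>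
  proof
    fix F
    show "act N \<sigma> x F = x F"
    proof (cases "F \<subseteq> edges_on N")
      case True
      define E where "E = gact (inv \<sigma>) F"
      have E: "E \<subseteq> edges_on N" unfolding E_def using gact_perm_edges[OF permutes_inv[OF s] True] .
      have F: "F = gact \<sigma> E" unfolding E_def using gact_inv(2)[OF s] True edges_on_ltp by blast
      show ?thesis unfolding F act_at[OF s E] using h s E by simp
    next
      case False
      then show ?thesis using act_out[OF s False] h by auto
    qed
  qed
  then show "x \<in> cohom N r" using h unfolding cohom_def by auto
qed

lemma card_verts: "finite F \<Longrightarrow> card (verts F) \<le> 2 * card F"
  unfolding verts_def
  by (metis (no_types, lifting) card_Un_le card_image_le add_mono mult_2 order_trans)

lemma exists_move:
  assumes F: "F \<subseteq> edges_on (Suc n)" and c: "card F = r" and r: "2 * r \<le> n"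
  shows "\<exists>\<sigma>. \<sigma> permutes {1..Suc n} \<and> gact \<sigma> F \<subseteq> edges_on n"
proof -
  have Fl: "F \<subseteq> ltp" and V: "verts F \<subseteq> {1..Suc n}" using F by (auto simp: edges_on_iff)
  have finF: "finite F" using F finite_edges_on finite_subset by blast
  show ?thesis
  proof (cases "Suc n \<in> verts F")
    case False
    then have "verts F \<subseteq> {1..n}" using V by (force simp: subset_iff le_Suc_eq)
    then have "gact id F \<subseteq> edges_on n" using gact_id[OF Fl] Fl by (simp add: edges_on_iff)
    then show ?thesis using permutes_id by blast
  next
    case True
    have cv: "card (verts F) \<le> n" using card_verts[OF finF] c r by simp
    have "\<exists>w\<in>{1..n}. w \<notin> verts F"
    proof (rule ccontr)
      assume "\<not> ?thesis"
      then have "insert (Suc n) {1..n} \<subseteq> verts F" using True by auto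
      moreover have "finite (verts F)" using V finite_subset by blast
      ultimately have "card (insert (Suc n) {1..n}) \<le> card (verts F)" by (rule card_mono[rotated])
      then show False using cv by simp
    qed
    then obtain w where w: "w \<in> {1..n}" "w \<notin> verts F" by blast
    have p: "transpose w (Suc n) permutes {1..Suc n}" using w by (intro permutes_swap_id) auto
    have "transpose w (Suc n) ` verts F \<subseteq> {1..n}"
    proof
      fix z assume "z \<in> transpose w (Suc n) ` verts F"
      then obtain u where u: "u \<in> verts F" "z = transpose w (Suc n) u" by blast
      then have "u \<noteq> w" "u \<in> {1..Suc n}" using w V by auto
      then show "z \<in> {1..n}" using u w by (cases "u = Suc n") (auto simp: transpose_def)
    qed
    then have "gact (transpose w (Suc n)) F \<subseteq> edges_on n"
      by (intro gact_edges[OF Fl]) (auto intro: permutes_inj[OF p])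
    then show ?thesis using p by blast
  qed
qed

lemma consist:
  assumes y: "y \<in> cohom n r" and s: "\<sigma> permutes {1..Suc n}" and F: "F \<subseteq> edges_on n"
    and G: "gact \<sigma> F \<subseteq> edges_on n"
  shows "y (gact \<sigma> F) = y F * esign \<sigma> F"
proof -
  have V: "verts F \<subseteq> {1..n}" using F by (simp add: edges_on_iff)
  have W: "\<sigma> ` verts F \<subseteq> {1..n}" using G by (simp add: edges_on_iff verts_gact)
  obtain \<pi> where \<pi>: "\<pi> permutes {1..n}" "\<forall>a\<in>verts F. \<pi> a = \<sigma> a"
    using ext_perm[OF _ V inj_on_subset[OF permutes_inj[OF s]] W] by auto
  have "gact \<pi> F = gact \<sigma> F" "esign \<pi> F = esign \<sigma> F"
    using \<pi>(2) by (auto intro!: gact_cong esign_cong)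
  then show ?thesis using y \<pi>(1) F unfolding cohom_iff by metis
qed

lemma res_bij:
  assumes r: "2 * r \<le> n"
  shows "bij_betw (res n) (cohom (Suc n) r) (cohom n r)"
proof (rule bij_betw_imageI)
  show "inj_on (res n) (cohom (Suc n) r)"
  proof (rule inj_onI)
    fix x y assume x: "x \<in> cohom (Suc n) r" and y: "y \<in> cohom (Suc n) r" and e: "res n x = res n y"
    show "x = y"
    proof
      fix F
      show "x F = y F"
      proof (cases "F \<subseteq> edges_on (Suc n) \<and> card F = r")
        case False
        then show ?thesis using x y unfolding cohom_iff by auto
      next
        case True
        then obtain \<sigma> where s: "\<sigma> permutes {1..Suc n}" "gact \<sigma> F \<subseteq> edges_on n"
          using exists_move r by blast
        have "x (gact \<sigma> F) = y (gact \<sigma> F)" using fun_cong[OF e, of "gact \<sigma> F"] s(2)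
          by (simp add: res_def)
        then have "x F * esign \<sigma> F = y F * esign \<sigma> F" using x y s(1) True unfolding cohom_iff by metis
        then show ?thesis using esign_nz by simp
      qed
    qed
  qed
next
  show "res n ` cohom (Suc n) r = cohom n r"
  proof
    have sub: "edges_on n \<subseteq> edges_on (Suc n)" unfolding edges_on_def by auto
    show "res n ` cohom (Suc n) r \<subseteq> cohom n r"
    proof
      fix z assume "z \<in> res n ` cohom (Suc n) r"
      then obtain x where x: "x \<in> cohom (Suc n) r" "z = res n x" by blast
      have xs: "\<And>F. (F \<notin> Pow (edges_on (Suc n)) \<or> card F \<noteq> r) \<Longrightarrow> x F = 0"
        and xi: "\<And>\<sigma> E. \<sigma> permutes {1..Suc n} \<Longrightarrow> E \<subseteq> edges_on (Suc n) \<Longrightarrow> x (gact \<sigma> E) = x E * esign \<sigma> E"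
        using x(1) unfolding cohom_iff by auto
      show "z \<in> cohom n r" unfolding cohom_iff
      proof (intro conjI allI impI)
        fix F assume "F \<notin> Pow (edges_on n) \<or> card F \<noteq> r"
        then show "z F = 0" using xs unfolding x(2) res_def by auto
      next
        fix \<sigma> E assume s: "\<sigma> permutes {1..n}" and E: "E \<subseteq> edges_on n"
        have s': "\<sigma> permutes {1..Suc n}" using s by (rule permutes_subset) auto
        have "gact \<sigma> E \<subseteq> edges_on n" using gact_perm_edges[OF s E] .
        then show "z (gact \<sigma> E) = z E * esign \<sigma> E" unfolding x(2) res_def
          using xi[OF s'] E sub by auto
      qed
    qed
    show "cohom n r \<subseteq> res n ` cohom (Suc n) r"
    proof
      fix y assume y: "y \<in> cohom n r"
      have ys: "\<And>F. (F \<notin> Pow (edges_on n) \<or> card F \<noteq> r) \<Longrightarrow> y F = 0"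
        using y unfolding cohom_iff by auto
      define c where "c F = (SOME \<sigma>. \<sigma> permutes {1..Suc n} \<and> gact \<sigma> F \<subseteq> edges_on n)" for F
      have cs: "c F permutes {1..Suc n} \<and> gact (c F) F \<subseteq> edges_on n"
        if Fa: "F \<subseteq> edges_on (Suc n)" "card F = r" for F
      proof -
        obtain \<sigma> where "\<sigma> permutes {1..Suc n} \<and> gact \<sigma> F \<subseteq> edges_on n" using exists_move[OF Fa r] by blast
        then show ?thesis unfolding c_def
          by (rule someI[where P="\<lambda>\<sigma>. \<sigma> permutes {1..Suc n} \<and> gact \<sigma> F \<subseteq> edges_on n"])
      qed
      define x where "x F = (if F \<subseteq> edges_on (Suc n) \<and> card F = r then y (gact (c F) F) * esign (c F) F else 0)" for F
      have xy: "x F = y F" if F: "F \<subseteq> edges_on n" for F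
      proof (cases "card F = r")
        case True
        have F': "F \<subseteq> edges_on (Suc n)" using F sub by blast
        have "x F = y (gact (c F) F) * esign (c F) F" using F' True by (simp add: x_def)
        also have "\<dots> = y F * (esign (c F) F * esign (c F) F)"
          using consist[OF y _ F] cs[OF F' True] by simp
        finally show ?thesis by (simp add: esign_sq)
      next
        case False
        then show ?thesis using ys by (simp add: x_def)
      qed
      have "res n x = y"
      proof
        fix F show "res n x F = y F"
          using xy ys by (auto simp: res_def)
      qed
      moreover have "x \<in> cohom (Suc n) r" unfolding cohom_iff
      proof (intro conjI allI impI)
        fix F assume "F \<notin> Pow (edges_on (Suc n)) \<or> card F \<noteq> r"
        then show "x F = 0" by (auto simp: x_def)
      next
        fix \<tau> E assume t: "\<tau> permutes {1..Suc n}" and E: "E \<subseteq> edges_on (Suc n)"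
        have El: "E \<subseteq> ltp" using E edges_on_ltp by blast
        have finE: "finite E" using E finite_edges_on finite_subset by blast
        have tE: "gact \<tau> E \<subseteq> edges_on (Suc n)" using gact_perm_edges[OF t E] .
        have ctE: "card (gact \<tau> E) = card E" using card_gact[OF permutes_inj[OF t] El] .
        show "x (gact \<tau> E) = x E * esign \<tau> E"
        proof (cases "card E = r")
          case False
          then show ?thesis using ctE by (simp add: x_def)
        next
          case True
          define \<sigma> where "\<sigma> = c E"
          define \<rho> where "\<rho> = c (gact \<tau> E)"
          have s: "\<sigma> permutes {1..Suc n}" "gact \<sigma> E \<subseteq> edges_on n"
            using cs[OF E True] unfolding \<sigma>_def by auto
          have p: "\<rho> permutes {1..Suc n}" "gact \<rho> (gact \<tau> E) \<subseteq> edges_on n"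
            using cs[OF tE] ctE True unfolding \<rho>_def by auto
          define G where "G = gact \<sigma> E"
          define \<pi> where "\<pi> = \<rho> \<circ> \<tau> \<circ> inv \<sigma>"
          have pp: "\<pi> permutes {1..Suc n}" unfolding \<pi>_def
            by (intro permutes_compose permutes_inv s p t)
          have ps: "\<pi> \<circ> \<sigma> = \<rho> \<circ> \<tau>" unfolding \<pi>_def
            using permutes_inv_o(2)[OF s(1)] by (simp add: comp_assoc)
          have gG: "gact \<pi> G = gact \<rho> (gact \<tau> E)" unfolding G_def gact_comp ps ..
          have K: "y (gact \<pi> G) = y G * esign \<pi> G"
            using consist[OF y pp] s(2) p(2) gG unfolding G_def by metis
          have c1: "esign (\<rho> \<circ> \<tau>) E = esign \<rho> (gact \<tau> E) * esign \<tau> E"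
            by (rule esign_comp[OF permutes_inj[OF p(1)] permutes_inj[OF t] finE El])
          have c2: "esign (\<pi> \<circ> \<sigma>) E = esign \<pi> G * esign \<sigma> E"
            unfolding G_def by (rule esign_comp[OF permutes_inj[OF pp] permutes_inj[OF s(1)] finE El])
          have eq: "esign \<rho> (gact \<tau> E) * esign \<tau> E = esign \<pi> G * esign \<sigma> E"
            using c1 c2 ps by simp
          have sq1: "esign \<rho> (gact \<tau> E) * esign \<rho> (gact \<tau> E) = 1" and sq2: "esign \<sigma> E * esign \<sigma> E = 1"
            by (rule esign_sq)+
          have key: "esign \<pi> G * esign \<rho> (gact \<tau> E) = esign \<sigma> E * esign \<tau> E"
            using eq sq1 sq2 by algebra
          have "x (gact \<tau> E) = y (gact \<rho> (gact \<tau> E)) * esign \<rho> (gact \<tau> E)"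
            using tE ctE True by (simp add: x_def \<rho>_def)
          also have "\<dots> = y G * (esign \<pi> G * esign \<rho> (gact \<tau> E))" using K gG by simp
          also have "\<dots> = y G * esign \<sigma> E * esign \<tau> E" using key by simp
          also have "\<dots> = x E * esign \<tau> E" using E True by (simp add: x_def \<sigma>_def G_def)
          finally show ?thesis .
        qed
      qed
      ultimately show "y \<in> res n ` cohom (Suc n) r" by blast
    qed
  qed
qed

lemma graph_on_ltp: "graph_on N E \<Longrightarrow> E \<subseteq> ltp"
  unfolding graph_on_def using edges_on_ltp by blast

lemma orbit_closed:
  assumes "\<tau> permutes {1..N}" "F \<in> orbit N E0"
  shows "gact \<tau> F \<in> orbit N E0"
proof -
  obtain \<sigma> where s: "\<sigma> permutes {1..N}" "F = gact \<sigma> E0" using assms(2) unfolding orbit_def by blast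
  have "gact \<tau> F = gact (\<tau> \<circ> \<sigma>) E0" unfolding s(2) gact_comp ..
  then show ?thesis unfolding orbit_def using permutes_compose[OF s(1) assms(1)] by blast
qed

lemma orbit_eq:
  assumes "E \<in> orbit N E0"
  shows "orbit N E = orbit N E0"
proof
  show "orbit N E \<subseteq> orbit N E0" using orbit_closed[OF _ assms] unfolding orbit_def by blast
  obtain \<sigma> where s: "\<sigma> permutes {1..N}" "E = gact \<sigma> E0" using assms unfolding orbit_def by blast
  show "orbit N E0 \<subseteq> orbit N E"
  proof
    fix F assume "F \<in> orbit N E0"
    then obtain \<rho> where r: "\<rho> permutes {1..N}" "F = gact \<rho> E0" unfolding orbit_def by blast
    have "gact (\<rho> \<circ> inv \<sigma>) E = gact (\<rho> \<circ> inv \<sigma> \<circ> \<sigma>) E0" unfolding s(2) gact_comp ..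
    also have "\<rho> \<circ> inv \<sigma> \<circ> \<sigma> = \<rho>" using permutes_inv_o(2)[OF s(1)] by (simp add: comp_assoc)
    finally have "F = gact (\<rho> \<circ> inv \<sigma>) E" using r by (simp only:)
    then show "F \<in> orbit N E" unfolding orbit_def
      using permutes_compose[OF permutes_inv[OF s(1)] r(1)] by blast
  qed
qed

lemma finite_verts_graph: "graph_on N E \<Longrightarrow> verts E \<subseteq> {1..N}"
  unfolding graph_on_def by (simp add: edges_on_iff)

lemma np_isofree:
  assumes g: "graph_on N E0"
  shows "nonisolated_part (orbit N E0) \<in> isofree_classes"
proof -
  define V where "V = verts E0"
  define m where "m = card V"
  have VN: "V \<subseteq> {1..N}" unfolding V_def using finite_verts_graph[OF g] .
  have finV: "finite V" using VN finite_subset by blast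
  have mN: "m \<le> N" unfolding m_def using card_mono[OF _ VN] by simp
  have cVm: "card V = card {1..m}" by (simp add: m_def)
  obtain h where h: "bij_betw h V {1..m}" using finite_same_card_bij[OF finV finite_atLeastAtMost cVm] by blast
  have hV: "h ` V = {1..m}" using h by (simp add: bij_betw_def)
  obtain \<pi> where \<pi>: "\<pi> permutes {1..N}" "\<forall>a\<in>V. \<pi> a = h a"
    using ext_perm[OF _ VN bij_betw_imp_inj_on[OF h]] hV mN by auto
  have piV: "\<pi> ` V = {1..m}" using \<pi>(2) hV by (simp add: image_cong[OF refl, of V \<pi> h])
  define G where "G = gact \<pi> E0"
  have vG: "verts G = {1..m}" unfolding G_def verts_gact V_def[symmetric] piV ..
  have gG: "graph_on m G" unfolding graph_on_def G_def
    by (rule gact_edges[OF graph_on_ltp[OF g] permutes_inj[OF \<pi>(1)]]) (simp add: piV V_def[symmetric])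
  have "nonisolated_part (orbit N E0) = orbit m G"
  proof
    show "nonisolated_part (orbit N E0) \<subseteq> orbit m G"
    proof
      fix F assume "F \<in> nonisolated_part (orbit N E0)"
      then obtain k \<sigma> where F: "F = gact \<sigma> E0" "\<sigma> permutes {1..N}" "verts F = {1..k}"
        unfolding nonisolated_part_def orbit_def by blast
      define \<rho> where "\<rho> = \<sigma> \<circ> inv \<pi>"
      have "gact \<rho> G = gact (\<sigma> \<circ> inv \<pi> \<circ> \<pi>) E0" unfolding \<rho>_def G_def gact_comp ..
      also have "\<sigma> \<circ> inv \<pi> \<circ> \<pi> = \<sigma>" using permutes_inv_o(2)[OF \<pi>(1)] by (simp add: comp_assoc)
      finally have rG: "gact \<rho> G = F" using F by simp
      have injr: "inj \<rho>" unfolding \<rho>_def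
        by (intro inj_compose permutes_inj[OF F(2)] permutes_inj[OF permutes_inv[OF \<pi>(1)]])
      have rim0: "\<rho> ` {1..m} = {1..k}" using verts_gact[of \<rho> G] unfolding rG vG F(3) by simp
      have "card (\<rho> ` {1..m}) = m" using card_image[OF inj_on_subset[OF injr, of "{1..m}"]] by simp
      then have km: "k = m" using rim0 by simp
      have rim: "\<rho> ` {1..m} = {1..m}" using rim0 km by simp
      then obtain \<tau> where \<tau>: "\<tau> permutes {1..m}" "\<forall>a\<in>{1..m}. \<tau> a = \<rho> a"
        using ext_perm[of "{1..m}" "{1..m}" \<rho>] rim inj_on_subset[OF injr] by auto
      have "gact \<tau> G = gact \<rho> G" using \<tau>(2) vG by (intro gact_cong) auto
      then show "F \<in> orbit m G" unfolding orbit_def using \<tau>(1) rG by auto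
    qed
    show "orbit m G \<subseteq> nonisolated_part (orbit N E0)"
    proof
      fix F assume "F \<in> orbit m G"
      then obtain \<tau> where t: "\<tau> permutes {1..m}" "F = gact \<tau> G" unfolding orbit_def by blast
      have t': "\<tau> permutes {1..N}" using t(1) by (rule permutes_subset) (use mN in auto)
      have "F = gact (\<tau> \<circ> \<pi>) E0" unfolding t(2) G_def gact_comp ..
      then have "F \<in> orbit N E0" unfolding orbit_def using permutes_compose[OF \<pi>(1) t'] by blast
      moreover have "verts F = {1..m}" unfolding t(2) verts_gact vG using permutes_image[OF t(1)] .
      ultimately show "F \<in> nonisolated_part (orbit N E0)" unfolding nonisolated_part_def by blast
    qed
  qed
  then show ?thesis unfolding isofree_classes_def using gG vG by blast
qed

lemma card_verts_iso:
  assumes g: "graph_on (Suc n) E" and v: "v \<in> {1..Suc n}" and iso: "isolated v E"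
  shows "card (verts E) \<le> n"
proof -
  have "verts E \<subseteq> {1..Suc n} - {v}" using finite_verts_graph[OF g] iso unfolding isolated_def by auto
  then have "card (verts E) \<le> card ({1..Suc n} - {v})" by (intro card_mono) auto
  then show ?thesis using v by simp
qed

lemma del_gact:
  assumes "E \<subseteq> ltp"
  shows "delete_vertex v E = gact (\<lambda>i. if i > v then i - 1 else i) E"
  unfolding delete_vertex_def gact_def
proof (rule image_cong[OF refl])
  fix e assume "e \<in> E"
  then have "fst e < snd e" using assms unfolding ltp_def by auto
  then show "(case e of (i, j) \<Rightarrow> (if v < i then i - 1 else i, if v < j then j - 1 else j)) =
    emap (\<lambda>i. if v < i then i - 1 else i) e"
    by (cases e) (auto simp: emap_def min_def max_def)
qed

lemma np_eq:
  assumes g: "graph_on (Suc n) E" and v: "v \<in> {1..Suc n}" and iso: "isolated v E"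
  shows "nonisolated_part (orbit n (delete_vertex v E)) = nonisolated_part (orbit (Suc n) E)"
proof -
  define \<delta> where "\<delta> i = (if i > v then i - 1 else (i::nat))" for i
  define \<epsilon> where "\<epsilon> i = (if i \<ge> v then i + 1 else (i::nat))" for i
  have El: "E \<subseteq> ltp" using graph_on_ltp[OF g] .
  have VE: "verts E \<subseteq> {1..Suc n}" "v \<notin> verts E"
    using finite_verts_graph[OF g] iso unfolding isolated_def by auto
  have ed: "\<epsilon> (\<delta> u) = u" if "u \<noteq> v" for u using that unfolding \<epsilon>_def \<delta>_def by auto
  have dE: "\<delta> ` verts E \<subseteq> {1..n}"
  proof
    fix z assume "z \<in> \<delta> ` verts E"
    then obtain u where u: "u \<in> verts E" "z = \<delta> u" by blast
    then have "u \<noteq> v" "u \<in> {1..Suc n}" using VE by auto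
    then show "z \<in> {1..n}" using u v unfolding \<delta>_def by (cases "u > v") auto
  qed
  have injd: "inj_on \<delta> (verts E)"
    by (rule inj_on_inverseI[of _ \<epsilon>]) (metis ed VE(2))
  have del: "delete_vertex v E = gact \<delta> E" unfolding \<delta>_def using del_gact[OF El] .
  have cv: "card (verts E) \<le> n" using card_verts_iso[OF assms] .
  have "F \<in> orbit n (delete_vertex v E) \<longleftrightarrow> F \<in> orbit (Suc n) E" if Fk: "verts F = {1..k}" for F k
  proof
    assume "F \<in> orbit n (delete_vertex v E)"
    then obtain \<tau> where t: "\<tau> permutes {1..n}" "F = gact \<tau> (delete_vertex v E)" unfolding orbit_def by blast
    have F: "F = gact (\<tau> \<circ> \<delta>) E" unfolding t(2) del gact_comp ..
    have i: "inj_on (\<tau> \<circ> \<delta>) (verts E)"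
      by (rule comp_inj_on[OF injd inj_on_subset[OF permutes_inj[OF t(1)]]]) auto
    have im: "(\<tau> \<circ> \<delta>) ` verts E \<subseteq> {1..Suc n}"
    proof
      fix z assume "z \<in> (\<tau> \<circ> \<delta>) ` verts E"
      then obtain u where u: "u \<in> verts E" "z = \<tau> (\<delta> u)" by auto
      then have "\<delta> u \<in> {1..n}" using dE by auto
      then have "\<tau> (\<delta> u) \<in> {1..n}" using permutes_in_image[OF t(1)] by blast
      then show "z \<in> {1..Suc n}" using u by auto
    qed
    obtain \<pi> where p: "\<pi> permutes {1..Suc n}" "\<forall>a\<in>verts E. \<pi> a = (\<tau> \<circ> \<delta>) a"
      using ext_perm[OF _ VE(1) i im] by auto
    have "gact \<pi> E = F" unfolding F using p(2) by (intro gact_cong) auto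
    then show "F \<in> orbit (Suc n) E" unfolding orbit_def using p(1) by blast
  next
    assume "F \<in> orbit (Suc n) E"
    then obtain \<sigma> where s: "\<sigma> permutes {1..Suc n}" "F = gact \<sigma> E" unfolding orbit_def by blast
    have "card (verts F) = card (verts E)" unfolding s(2) verts_gact
      by (rule card_image[OF inj_on_subset[OF permutes_inj[OF s(1)]]]) auto
    then have "k \<le> n" using cv Fk by simp
    then have vF: "\<sigma> ` verts E \<subseteq> {1..n}" using Fk unfolding s(2) verts_gact by auto
    define f where "f = \<sigma> \<circ> \<epsilon>"
    have i: "inj_on f (\<delta> ` verts E)"
    proof (rule inj_onI)
      fix a b assume "a \<in> \<delta> ` verts E" "b \<in> \<delta> ` verts E" "f a = f b"
      then obtain u w where uw: "u \<in> verts E" "w \<in> verts E" "a = \<delta> u" "b = \<delta> w" "\<sigma> (\<epsilon> (\<delta> u)) = \<sigma> (\<epsilon> (\<delta> w))"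
        unfolding f_def by auto
      then have "u \<noteq> v" "w \<noteq> v" using VE by auto
      then have "\<sigma> u = \<sigma> w" using uw ed by simp
      then show "a = b" using uw permutes_inj[OF s(1)] by (auto dest: injD)
    qed
    have fim: "f ` (\<delta> ` verts E) \<subseteq> {1..n}"
    proof
      fix z assume "z \<in> f ` (\<delta> ` verts E)"
      then obtain u where u: "u \<in> verts E" "z = \<sigma> (\<epsilon> (\<delta> u))" unfolding f_def by auto
      then have "z = \<sigma> u" using ed VE by metis
      then show "z \<in> {1..n}" using vF u by auto
    qed
    obtain \<pi> where p: "\<pi> permutes {1..n}" "\<forall>a\<in>\<delta> ` verts E. \<pi> a = f a"
      using ext_perm[OF _ dE i fim] by auto
    have "gact \<pi> (delete_vertex v E) = gact (\<pi> \<circ> \<delta>) E" unfolding del gact_comp ..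
    also have "\<dots> = gact \<sigma> E"
    proof (rule gact_cong)
      fix u assume u: "u \<in> verts E"
      then have "u \<noteq> v" using VE by auto
      then show "(\<pi> \<circ> \<delta>) u = \<sigma> u" using p(2) u ed unfolding f_def by auto
    qed
    finally show "F \<in> orbit n (delete_vertex v E)" unfolding orbit_def using p(1) s(2) by blast
  qed
  then show ?thesis unfolding nonisolated_part_def by blast
qed

lemma sum_ite_const:
  assumes "finite A"
  shows "(\<Sum>b\<in>A. if b \<in> B then 0 else (c::rat)) = of_nat (card (A - B)) * c"
proof -
  have "(\<Sum>b\<in>A. if b \<in> B then 0 else c) = (\<Sum>b\<in>A. if b \<in> A - B then c else 0)"
    by (rule sum.cong) auto
  also have "\<dots> = (\<Sum>b\<in>A - B. c)" using assms by (simp add: sum.If_cases Int_absorb2 Diff_subset set_diff_eq Collect_conj_eq[symmetric] Int_def)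
  also have "\<dots> = of_nat (card (A - B)) * c" by simp
  finally show ?thesis .
qed

lemma sum_ext:
  fixes g :: "(nat \<Rightarrow> nat) \<Rightarrow> rat"
  assumes D: "\<Delta> \<subseteq> edges_on n" and F: "F \<subseteq> edges_on n"
    and g: "\<And>\<sigma> \<tau>. (\<And>u. u \<in> verts \<Delta> \<Longrightarrow> \<sigma> u = \<tau> u) \<Longrightarrow> g \<sigma> = g \<tau>"
  shows "(\<Sum>\<sigma>\<in>{\<sigma>. \<sigma> permutes {1..Suc n}}. if gact \<sigma> \<Delta> = F then g \<sigma> else 0) =
    of_nat (Suc n - card (verts \<Delta>)) * (\<Sum>\<sigma>\<in>{\<sigma>. \<sigma> permutes {1..n}}. if gact \<sigma> \<Delta> = F then g \<sigma> else 0)"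
proof -
  define h where "h \<sigma> = (if gact \<sigma> \<Delta> = F then g \<sigma> else 0)" for \<sigma>
  define V where "V = verts \<Delta>"
  have V: "V \<subseteq> {1..n}" using D unfolding V_def by (simp add: edges_on_iff)
  have VF: "verts F \<subseteq> {1..n}" using F by (simp add: edges_on_iff)
  have ins: "{1..Suc n} = insert (Suc n) {1..n}" by auto
  have inner: "(\<Sum>b\<in>{1..Suc n}. h (transpose (Suc n) b \<circ> q)) = of_nat (Suc n - card V) * h q"
    if q: "q permutes {1..n}" for q
  proof -
    define B where "B = q ` V"
    have BV: "B \<subseteq> {1..n}" unfolding B_def using V permutes_in_image[OF q] by blast
    have cB: "card B = card V" unfolding B_def
      by (rule card_image[OF inj_on_subset[OF permutes_inj[OF q]]]) auto
    have pt: "h (transpose (Suc n) b \<circ> q) = (if b \<in> B then 0 else h q)" if b: "b \<in> {1..Suc n}" for b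
    proof (cases "b \<in> B")
      case True
      then obtain u where u: "u \<in> V" "b = q u" unfolding B_def by blast
      have "b \<noteq> Suc n" using True BV by auto
      then have "Suc n \<in> verts (gact (transpose (Suc n) b \<circ> q) \<Delta>)"
        unfolding verts_gact V_def[symmetric] using u by (auto intro!: image_eqI[of _ _ u])
      then have "gact (transpose (Suc n) b \<circ> q) \<Delta> \<noteq> F" using VF by auto
      then show ?thesis using True by (simp add: h_def)
    next
      case False
      have agree: "(transpose (Suc n) b \<circ> q) u = q u" if u: "u \<in> V" for u
      proof -
        have "q u \<in> {1..n}" using u V permutes_in_image[OF q] by blast
        moreover have "q u \<noteq> b" using False u unfolding B_def by auto
        ultimately show ?thesis by (auto simp: transpose_def)
      qed
      have "gact (transpose (Suc n) b \<circ> q) \<Delta> = gact q \<Delta>" by (rule gact_cong) (use agree V_def in auto)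
      moreover have "g (transpose (Suc n) b \<circ> q) = g q" by (rule g) (use agree V_def in auto)
      ultimately show ?thesis using False by (simp add: h_def)
    qed
    have "(\<Sum>b\<in>{1..Suc n}. h (transpose (Suc n) b \<circ> q)) = (\<Sum>b\<in>{1..Suc n}. if b \<in> B then 0 else h q)"
      using pt by (rule sum.cong[OF refl])
    also have "\<dots> = of_nat (card ({1..Suc n} - B)) * h q" by (rule sum_ite_const) simp
    also have "card ({1..Suc n} - B) = Suc n - card V"
    proof -
      have "B \<subseteq> {1..Suc n}" using BV by auto
      then show ?thesis using card_Diff_subset[of B "{1..Suc n}"] cB finite_subset[OF BV] by simp
    qed
    finally show ?thesis .
  qed
  have "(\<Sum>\<sigma>\<in>{\<sigma>. \<sigma> permutes {1..Suc n}}. h \<sigma>) =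
      (\<Sum>b\<in>{1..Suc n}. \<Sum>q\<in>{p. p permutes {1..n}}. h (transpose (Suc n) b \<circ> q))"
    unfolding ins by (rule sum_over_permutations_insert) auto
  also have "\<dots> = (\<Sum>q\<in>{p. p permutes {1..n}}. \<Sum>b\<in>{1..Suc n}. h (transpose (Suc n) b \<circ> q))"
    by (rule sum.swap)
  also have "\<dots> = (\<Sum>q\<in>{p. p permutes {1..n}}. of_nat (Suc n - card V) * h q)"
    using inner by (intro sum.cong) auto
  also have "\<dots> = of_nat (Suc n - card V) * (\<Sum>q\<in>{p. p permutes {1..n}}. h q)"
    by (simp add: sum_distrib_left)
  finally show ?thesis unfolding h_def V_def .
qed

lemma card_stab_sum:
  "(of_nat (card (stab N \<Delta>)) :: rat) = (\<Sum>\<sigma>\<in>{\<sigma>. \<sigma> permutes {1..N}}. if gact \<sigma> \<Delta> = \<Delta> then 1 else 0)"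
proof -
  have fin: "finite {\<sigma>. \<sigma> permutes {1..N}}" by (rule finite_permutations) simp
  have "stab N \<Delta> = {\<sigma> \<in> {\<sigma>. \<sigma> permutes {1..N}}. gact \<sigma> \<Delta> = \<Delta>}" unfolding stab_def by auto
  then show ?thesis using fin by (simp add: sum.inter_filter[symmetric])
qed

lemma alpha_res:
  assumes R1: "Delta R D = \<Delta>" and R2: "Delta R D' = \<Delta>" and D: "\<Delta> \<subseteq> edges_on n"
    and cv: "card (verts \<Delta>) \<le> n"
  shows "res n (alpha R (Suc n) D) = alpha R n D'"
proof
  fix F
  show "res n (alpha R (Suc n) D) F = alpha R n D' F"
  proof (cases "F \<subseteq> edges_on n")
    case True
    define k where "k = (of_nat (Suc n - card (verts \<Delta>)) :: rat)"
    have k0: "k \<noteq> 0" unfolding k_def using cv by simp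
    define S where "S = (\<Sum>\<sigma>\<in>{\<sigma>. \<sigma> permutes {1..n}}. if gact \<sigma> \<Delta> = F then esign \<sigma> \<Delta> else 0)"
    define c where "c = (of_nat (card (stab n \<Delta>)) :: rat)"
    have s1: "(\<Sum>\<sigma>\<in>{\<sigma>. \<sigma> permutes {1..Suc n}}. if gact \<sigma> \<Delta> = F then esign \<sigma> \<Delta> else 0) = k * S"
      unfolding k_def S_def by (rule sum_ext[OF D True]) (rule esign_cong)
    have c1: "(of_nat (card (stab (Suc n) \<Delta>)) :: rat) = k * c"
      unfolding card_stab_sum c_def k_def
      using sum_ext[OF D D, of "\<lambda>_. 1"] by simp
    have "res n (alpha R (Suc n) D) F = 1 / (k * c) * (k * S)"
      using True unfolding res_def alpha_def R1 s1 c1 by simp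
    also have "\<dots> = 1 / c * S" using k0 by (cases "c = 0") (simp_all add: field_simps)
    also have "\<dots> = alpha R n D' F" unfolding alpha_def R2 S_def c_def by simp
    finally show ?thesis .
  next
    case False
    have "(\<Sum>\<sigma>\<in>{\<sigma>. \<sigma> permutes {1..n}}. if gact \<sigma> \<Delta> = F then esign \<sigma> \<Delta> else 0) = 0"
      using gact_perm_edges[OF _ D] False by (intro sum.neutral) auto
    then show ?thesis using False unfolding res_def alpha_def R2 by simp
  qed
qed

lemma alpha_zero:
  assumes R1: "Delta R D = \<Delta>"
    and nz: "\<And>\<sigma>. \<sigma> permutes {1..Suc n} \<Longrightarrow> \<not> gact \<sigma> \<Delta> \<subseteq> edges_on n"
  shows "res n (alpha R (Suc n) D) = (\<lambda>F. 0)"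
proof
  fix F
  show "res n (alpha R (Suc n) D) F = 0"
  proof (cases "F \<subseteq> edges_on n")
    case True
    have "(\<Sum>\<sigma>\<in>{\<sigma>. \<sigma> permutes {1..Suc n}}. if gact \<sigma> \<Delta> = F then esign \<sigma> \<Delta> else 0) = 0"
      using nz True by (intro sum.neutral) auto
    then show ?thesis unfolding res_def alpha_def R1 by simp
  next
    case False
    then show ?thesis unfolding res_def by simp
  qed
qed

theorem proposition2p9:
  fixes R :: "(nat \<times> nat) set set \<Rightarrow> (nat \<times> nat) set" and n :: nat
  assumes "rep_choice R" and "n \<ge> 1"
  shows "(\<forall>D \<in> D_classes (Suc n).
            (\<forall>E v. E \<in> D \<longrightarrow> v \<in> {1..Suc n} \<longrightarrow> isolated v E \<longrightarrow>
                res n (alpha R (Suc n) D) = alpha R n (orbit n (delete_vertex v E))) \<and>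
            ((\<forall>E \<in> D. \<forall>v \<in> {1..Suc n}. \<not> isolated v E) \<longrightarrow>
                res n (alpha R (Suc n) D) = (\<lambda>F. 0)))
         \<and> (\<forall>r. 2 * r \<le> n \<longrightarrow> bij_betw (res n) (cohom (Suc n) r) (cohom n r))"
proof (rule conjI)
  show "\<forall>r. 2 * r \<le> n \<longrightarrow> bij_betw (res n) (cohom (Suc n) r) (cohom n r)" using res_bij by blast
next
 show "\<forall>D \<in> D_classes (Suc n).
            (\<forall>E v. E \<in> D \<longrightarrow> v \<in> {1..Suc n} \<longrightarrow> isolated v E \<longrightarrow>
                res n (alpha R (Suc n) D) = alpha R n (orbit n (delete_vertex v E))) \<and>
            ((\<forall>E \<in> D. \<forall>v \<in> {1..Suc n}. \<not> isolated v E) \<longrightarrow>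
                res n (alpha R (Suc n) D) = (\<lambda>F. 0))"
 proof
  fix D assume "D \<in> D_classes (Suc n)"
  then obtain E0 where E0: "D = orbit (Suc n) E0" "graph_on (Suc n) E0"
    unfolding D_classes_def graph_classes_def by blast
  define \<Delta> where "\<Delta> = Delta R D"
  have "nonisolated_part D \<in> isofree_classes" unfolding E0(1) by (rule np_isofree[OF E0(2)])
  then have "\<Delta> \<in> nonisolated_part D" using assms(1) unfolding rep_choice_def \<Delta>_def Delta_def by blast
  then obtain m where \<Delta>D: "\<Delta> \<in> D" and vD: "verts \<Delta> = {1..m}" unfolding nonisolated_part_def by blast
  obtain \<sigma>0 where s0: "\<sigma>0 permutes {1..Suc n}" "\<Delta> = gact \<sigma>0 E0" using \<Delta>D E0(1) unfolding orbit_def by blast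
  have gD: "\<Delta> \<subseteq> edges_on (Suc n)" using gact_perm_edges[OF s0(1)] E0(2) s0(2) unfolding graph_on_def by blast
  have part2: "((\<forall>E \<in> D. \<forall>v \<in> {1..Suc n}. \<not> isolated v E) \<longrightarrow> res n (alpha R (Suc n) D) = (\<lambda>F. 0))"
  proof
    assume noiso: "\<forall>E \<in> D. \<forall>v \<in> {1..Suc n}. \<not> isolated v E"
    show "res n (alpha R (Suc n) D) = (\<lambda>F. 0)"
    proof (rule alpha_zero[OF \<Delta>_def[symmetric]])
      fix \<sigma> assume s: "\<sigma> permutes {1..Suc n}"
      have "gact \<sigma> \<Delta> \<in> D" using orbit_closed[OF s] \<Delta>D E0(1) by blast
      then have "Suc n \<in> verts (gact \<sigma> \<Delta>)" using noiso unfolding isolated_def by auto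
      then show "\<not> gact \<sigma> \<Delta> \<subseteq> edges_on n" by (auto simp: edges_on_iff)
    qed
  qed
  have part1: "\<forall>E v. E \<in> D \<longrightarrow> v \<in> {1..Suc n} \<longrightarrow> isolated v E \<longrightarrow>
                res n (alpha R (Suc n) D) = alpha R n (orbit n (delete_vertex v E))"
  proof (intro allI impI)
    fix E v assume ED: "E \<in> D" and v: "v \<in> {1..Suc n}" and iso: "isolated v E"
    obtain \<sigma> where s: "\<sigma> permutes {1..Suc n}" "E = gact \<sigma> E0" using ED E0(1) unfolding orbit_def by blast
    have gE: "graph_on (Suc n) E" using gact_perm_edges[OF s(1)] E0(2) s(2) unfolding graph_on_def by blast
    have DE: "D = orbit (Suc n) E" using orbit_eq[of E "Suc n" E0] ED E0(1) by simp
    have np: "nonisolated_part (orbit n (delete_vertex v E)) = nonisolated_part D"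
      unfolding DE by (rule np_eq[OF gE v iso])
    have R2: "Delta R (orbit n (delete_vertex v E)) = \<Delta>" unfolding Delta_def np \<Delta>_def ..
    obtain \<tau> where t: "\<tau> permutes {1..Suc n}" "\<Delta> = gact \<tau> E" using \<Delta>D DE unfolding orbit_def by blast
    have cv: "card (verts \<Delta>) = card (verts E)" unfolding t(2) verts_gact
      by (rule card_image[OF inj_on_subset[OF permutes_inj[OF t(1)]]]) auto
    then have cvn: "card (verts \<Delta>) \<le> n" using card_verts_iso[OF gE v iso] by simp
    then have "verts \<Delta> \<subseteq> {1..n}" using vD by auto
    then have D: "\<Delta> \<subseteq> edges_on n" using gD by (simp add: edges_on_iff)
    show "res n (alpha R (Suc n) D) = alpha R n (orbit n (delete_vertex v E))"
      by (rule alpha_res[OF \<Delta>_def[symmetric] R2 D cvn])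
  qed
  show "(\<forall>E v. E \<in> D \<longrightarrow> v \<in> {1..Suc n} \<longrightarrow> isolated v E \<longrightarrow>
                res n (alpha R (Suc n) D) = alpha R n (orbit n (delete_vertex v E))) \<and>
            ((\<forall>E \<in> D. \<forall>v \<in> {1..Suc n}. \<not> isolated v E) \<longrightarrow>
                res n (alpha R (Suc n) D) = (\<lambda>F. 0))" using part1 part2 by blast
 qed
qed

end
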